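(* Let $\gamma=(\gamma_1,\dots,\gamma_b)$ be a parallel map on $V=V_1\oplus\cdots\oplus V_b$, $V_i\cong(\mathbb F_2)^m$, with $0\gamma=0$. Let $U$ be a subspace of $V$ of dimension $n-1$. Suppose that for every $i\notin J_U$, $\gamma_i$ is differentially $2^r$-uniform with $r<m$ and strongly $(r-1)$-anti-invariant, and for every $j\in J_U$, $\gamma_j$ is differentially $2^r$-uniform with $r<m-1$ and strongly $r$-anti-invariant. If $\gamma$ maps $\mathcal L(W)$ onto a non-trivial partition $\mathcal{LA}_U(W_1|W_2)$, then $W,W_1,W_2$ are walls and $W=W_1=W_2$; in particular $\mathcal{LA}_U(W_1|W_2)$ is linear.
   Context: Let $m,b>1$, $n=mb$, $V=(\mathbb F_2)^n=V_1\oplus\cdots\oplus V_b$, $V_i\cong(\mathbb F_2)^m$. Permutations act on the right. A parallel map is $\gamma\in\mathrm{Sym}(V)$ with $(v_1\oplus\cdots\oplus v_b)\gamma=v_1\gamma_1\oplus\cdots\oplus v_b\gamma_b$, $\gamma_i\in\mathrm{Sym}(V_i)$. A wall is $\bigoplus_{i\in I}V_i$ with $\emptyset\ne I\subsetneq\{1,\dots,b\}$. For a subspace $U$ of dimension $n-1$, $J_U=\{j: V_j\cap U\subsetneq V_j\}$. $f:(\mathbb F_2)^m\to(\mathbb F_2)^m$ is differentially $\delta$-uniform if $\delta=\max_{a\ne0,b}|\{x:f(x+a)+f(x)=b\}|$; for $f(0)=0$, $f$ is strongly $s$-anti-invariant if for all subspaces $U',W'$ of $(\mathbb F_2)^m$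 with $f(U')=W'$, either $\dim U'=\dim W'<m-s$ or $U'=W'=(\mathbb F_2)^m$. A permutation maps a partition $\mathcal A$ onto $\mathcal B$ if it sends the blocks of $\mathcal A$ exactly onto the blocks of $\mathcal B$; trivial partitions are the singleton partition and $\{V\}$. $\mathcal L(W)=\{W+v:v\in V\}$. For subspaces $W_1,W_2\subseteq U$, $\mathcal{LA}_U(W_1|W_2)=\{W_1+v:v\in U\}\cup\{(W_2+\bar v)+v:v\in U\}$ for any $\bar v\in V\setminus U$. *)

theory Defs
  imports Main "HOL-Library.Z2"
begin

text \<open>The space (F_2)^k is modelled as the set of coordinate functions
  nat => bit (bit = the field F_2) vanishing outside {0..<k}.\<close>

definition Vec :: "nat \<Rightarrow> (nat \<Rightarrow> bit) set" where
  "Vec k = {x. \<forall>i\<ge>k. x i = 0}"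

definition vzero :: "nat \<Rightarrow> bit" where
  "vzero = (\<lambda>_. 0)"

definition vadd :: "(nat \<Rightarrow> bit) \<Rightarrow> (nat \<Rightarrow> bit) \<Rightarrow> (nat \<Rightarrow> bit)" where
  "vadd x y = (\<lambda>i. x i + y i)"

text \<open>Subspace of (F_2)^k: over F_2 the only scalars are 0 and 1, so a subspace is
  a subset containing 0 and closed under addition.\<close>
definition f2subspace :: "nat \<Rightarrow> (nat \<Rightarrow> bit) set \<Rightarrow> bool" where
  "f2subspace k U \<longleftrightarrow> U \<subseteq> Vec k \<and> vzero \<in> U \<and> (\<forall>x\<in>U. \<forall>y\<in>U. vadd x y \<in> U)"

definition f2dim :: "(nat \<Rightarrow> bit) set \<Rightarrow> nat" where
  "f2dim U = (THE d. card U = 2 ^ d)"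

definition coset :: "(nat \<Rightarrow> bit) set \<Rightarrow> (nat \<Rightarrow> bit) \<Rightarrow> (nat \<Rightarrow> bit) set" where
  "coset W v = (\<lambda>w. vadd w v) ` W"

text \<open>Block structure: V = (F_2)^(m*b) = V_0 + ... + V_(b-1), block j occupying
  coordinates j*m ..< (j+1)*m (blocks are 0-indexed here).\<close>

definition block_proj :: "nat \<Rightarrow> nat \<Rightarrow> (nat \<Rightarrow> bit) \<Rightarrow> (nat \<Rightarrow> bit)" where
  "block_proj m j x = (\<lambda>k. if k < m then x (j * m + k) else 0)"

definition parallel :: "nat \<Rightarrow> nat \<Rightarrow> (nat \<Rightarrow> (nat \<Rightarrow> bit) \<Rightarrow> (nat \<Rightarrow> bit))
    \<Rightarrow> (nat \<Rightarrow> bit) \<Rightarrow> (nat \<Rightarrow> bit)" where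
  "parallel m b g x = (\<lambda>k. if k < m * b then g (k div m) (block_proj m (k div m) x) (k mod m) else 0)"

definition blocks :: "nat \<Rightarrow> nat \<Rightarrow> nat set \<Rightarrow> (nat \<Rightarrow> bit) set" where
  "blocks m b I = {x \<in> Vec (m * b). \<forall>k. x k \<noteq> 0 \<longrightarrow> k div m \<in> I}"

definition Vblock :: "nat \<Rightarrow> nat \<Rightarrow> nat \<Rightarrow> (nat \<Rightarrow> bit) set" where
  "Vblock m b j = blocks m b {j}"

definition is_wall :: "nat \<Rightarrow> nat \<Rightarrow> (nat \<Rightarrow> bit) set \<Rightarrow> bool" where
  "is_wall m b W \<longleftrightarrow> (\<exists>I. I \<subseteq> {..<b} \<and> I \<noteq> {} \<and> I \<noteq> {..<b} \<and> W = blocks m b I)"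

definition J_set :: "nat \<Rightarrow> nat \<Rightarrow> (nat \<Rightarrow> bit) set \<Rightarrow> nat set" where
  "J_set m b U = {j. j < b \<and> Vblock m b j \<inter> U \<subset> Vblock m b j}"

definition diff_uniform :: "nat \<Rightarrow> ((nat \<Rightarrow> bit) \<Rightarrow> (nat \<Rightarrow> bit)) \<Rightarrow> nat \<Rightarrow> bool" where
  "diff_uniform m f \<delta> \<longleftrightarrow>
     \<delta> = Max {card {x \<in> Vec m. vadd (f (vadd x a)) (f x) = c} | a c.
                 a \<in> Vec m \<and> a \<noteq> vzero \<and> c \<in> Vec m}"

text \<open>Strong s-anti-invariance (for f with f 0 = 0); s is an integer so that s = r - 1
  is meaningful also for r = 0.\<close>
definition strongly_anti_invariant :: "nat \<Rightarrow> ((nat \<Rightarrow> bit) \<Rightarrow> (nat \<Rightarrow> bit)) \<Rightarrow> int \<Rightarrow> bool" where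
  "strongly_anti_invariant m f s \<longleftrightarrow>
     (\<forall>U' W'. f2subspace m U' \<and> f2subspace m W' \<and> f ` U' = W' \<longrightarrow>
        (f2dim U' = f2dim W' \<and> int (f2dim U') < int m - s) \<or> (U' = Vec m \<and> W' = Vec m))"

definition maps_partition :: "('a \<Rightarrow> 'a) \<Rightarrow> 'a set set \<Rightarrow> 'a set set \<Rightarrow> bool" where
  "maps_partition \<gamma> A B \<longleftrightarrow> (\<lambda>X. \<gamma> ` X) ` A = B"

definition trivial_partition :: "'a set \<Rightarrow> 'a set set \<Rightarrow> bool" where
  "trivial_partition V P \<longleftrightarrow> P = (\<lambda>v. {v}) ` V \<or> P = {V}"

definition Lpart :: "nat \<Rightarrow> (nat \<Rightarrow> bit) set \<Rightarrow> (nat \<Rightarrow> bit) set set" where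
  "Lpart n W = coset W ` Vec n"

definition LApart :: "(nat \<Rightarrow> bit) set \<Rightarrow> (nat \<Rightarrow> bit) set \<Rightarrow> (nat \<Rightarrow> bit) set
    \<Rightarrow> (nat \<Rightarrow> bit) \<Rightarrow> (nat \<Rightarrow> bit) set set" where
  "LApart U W1 W2 vbar = coset W1 ` U \<union> coset (coset W2 vbar) ` U"

definition linear_partition :: "nat \<Rightarrow> (nat \<Rightarrow> bit) set set \<Rightarrow> bool" where
  "linear_partition n P \<longleftrightarrow> (\<exists>X. f2subspace n X \<and> P = Lpart n X)"

end

theory Submission imports Defs "HOL-Computational_Algebra.Primes" "HOL-Library.FuncSet"
begin

declare add_bit_eq_xor[simp del]

lemma bit_add_self[simp]: "(x::bit) + x = 0"
  by (cases x) simp_all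

lemma vadd_comm: "vadd x y = vadd y x"
  unfolding vadd_def by (simp add: add.commute)
lemma vadd_assoc: "vadd (vadd x y) z = vadd x (vadd y z)"
  unfolding vadd_def by (simp add: add.assoc)
lemma vadd_self[simp]: "vadd x x = vzero"
  unfolding vadd_def vzero_def by simp
lemma vadd_zero[simp]: "vadd x vzero = x" "vadd vzero x = x"
  unfolding vadd_def vzero_def by simp_all
lemma vadd_cancel_left[simp]: "vadd x (vadd x y) = y"
  by (simp add: vadd_assoc[symmetric])
lemma vadd_cancel_right[simp]: "vadd (vadd y x) x = y"
  by (simp add: vadd_assoc)
lemma vadd_inj: "vadd x v = vadd y v \<longleftrightarrow> x = y"
proof
  assume "vadd x v = vadd y v"
  hence "vadd (vadd x v) v = vadd (vadd y v) v" by simp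
  thus "x = y" by simp
qed simp
lemma vadd_eq_zero: "vadd x y = vzero \<longleftrightarrow> x = y"
  using vadd_inj[of x y y] by simp
lemma vadd_swap: "vadd (vadd x a) (vadd x b) = vadd a b"
  unfolding vadd_def by (rule ext) (metis add.assoc add.commute bit_add_self add_0)
lemma vadd_swap2: "vadd (vadd a x) (vadd b x) = vadd a b"
  using vadd_swap[of x a b] by (simp add: vadd_comm)
lemma vadd_rearr: "vadd x v2 = vadd (vadd x v1) (vadd v1 v2)"
  by (simp add: vadd_assoc)

lemma Vec_add: "x \<in> Vec k \<Longrightarrow> y \<in> Vec k \<Longrightarrow> vadd x y \<in> Vec k"
  unfolding Vec_def vadd_def by simp
lemma Vec_zero[simp]: "vzero \<in> Vec k"
  unfolding Vec_def vzero_def by simp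

lemma Vec_image: "Vec k = (\<lambda>f i. if i < k then f i else 0) ` (PiE {..<k} (\<lambda>_. UNIV::bit set))"
proof (rule equalityI)
  show "Vec k \<subseteq> (\<lambda>f i. if i < k then f i else 0) ` (PiE {..<k} (\<lambda>_. UNIV::bit set))"
  proof
    fix x assume x: "x \<in> Vec k"
    have e: "x = (\<lambda>i. if i < k then restrict x {..<k} i else 0)"
      using x unfolding Vec_def by (simp add: fun_eq_iff)
    have r: "restrict x {..<k} \<in> PiE {..<k} (\<lambda>_. UNIV::bit set)" by simp
    show "x \<in> (\<lambda>f i. if i < k then f i else 0) ` (PiE {..<k} (\<lambda>_. UNIV::bit set))"
      using e r by blast
  qed
  show "(\<lambda>f i. if i < k then f i else 0) ` (PiE {..<k} (\<lambda>_. UNIV::bit set)) \<subseteq> Vec k"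
    unfolding Vec_def by (simp add: image_subset_iff)
qed

lemma inj_Vec_image: "inj_on (\<lambda>f i. if i < k then f i else (0::bit)) (PiE {..<k} (\<lambda>_. UNIV::bit set))"
proof (rule inj_onI)
  fix f g assume f: "f \<in> PiE {..<k} (\<lambda>_. UNIV::bit set)" and g: "g \<in> PiE {..<k} (\<lambda>_. UNIV::bit set)"
    and e: "(\<lambda>i. if i < k then f i else 0) = (\<lambda>i. if i < k then g i else 0)"
  show "f = g"
  proof
    fix i show "f i = g i"
      using f g fun_cong[OF e, of i] by (cases "i < k") (auto simp: PiE_def extensional_def)
  qed
qed

lemma bit_UNIV: "(UNIV :: bit set) = {0, 1}"
proof -
  have "x \<in> {0, 1}" for x :: bit by (cases x) simp_all
  thus ?thesis by blast
qed

lemma card_bit_UNIV: "card (UNIV :: bit set) = 2"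
  unfolding bit_UNIV by simp

lemma finite_bit_UNIV: "finite (UNIV :: bit set)"
  unfolding bit_UNIV by simp

lemma finite_Vec[simp]: "finite (Vec k)"
  by (subst Vec_image) (intro finite_imageI finite_PiE, auto simp: finite_bit_UNIV)

lemma card_Vec: "card (Vec k) = 2 ^ k"
  by (subst Vec_image, subst card_image[OF inj_Vec_image]) (simp add: card_PiE card_bit_UNIV)

lemma coset_card: "card (coset S v) = card S"
  unfolding coset_def by (rule card_image) (auto simp: inj_on_def vadd_inj)

lemma coset_mem: "x \<in> coset S v \<longleftrightarrow> vadd x v \<in> S"
  unfolding coset_def by (auto intro: image_eqI[of _ _ "vadd x v"])

lemma coset_self: "f2subspace k S \<Longrightarrow> v \<in> S \<Longrightarrow> coset S v = S"
proof -
  assume S: "f2subspace k S" and v: "v \<in> S"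
  have "x \<in> coset S v \<longleftrightarrow> x \<in> S" for x
  proof
    assume "x \<in> coset S v"
    hence "vadd (vadd x v) v \<in> S" using S v unfolding coset_mem f2subspace_def by blast
    thus "x \<in> S" by (simp only: vadd_cancel_right)
  next
    assume "x \<in> S" thus "x \<in> coset S v" using S v by (simp add: coset_mem f2subspace_def)
  qed
  thus ?thesis by blast
qed

lemma coset_eq: "f2subspace k S \<Longrightarrow> vadd v1 v2 \<in> S \<Longrightarrow> coset S v1 = coset S v2"
proof -
  assume S: "f2subspace k S" and e: "vadd v1 v2 \<in> S"
  have e2: "vadd v2 v1 \<in> S" using e by (simp add: vadd_comm)
  have cl: "\<And>x y. x \<in> S \<Longrightarrow> y \<in> S \<Longrightarrow> vadd x y \<in> S" using S unfolding f2subspace_def by blast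
  have "x \<in> coset S v1 \<longleftrightarrow> x \<in> coset S v2" for x
  proof
    assume "x \<in> coset S v1"
    hence "vadd (vadd x v1) (vadd v1 v2) \<in> S" using cl e unfolding coset_mem by blast
    thus "x \<in> coset S v2" unfolding coset_mem vadd_rearr[of x v2 v1, symmetric] .
  next
    assume "x \<in> coset S v2"
    hence "vadd (vadd x v2) (vadd v2 v1) \<in> S" using cl e2 unfolding coset_mem by blast
    thus "x \<in> coset S v1" unfolding coset_mem vadd_rearr[of x v1 v2, symmetric] .
  qed
  thus ?thesis by blast
qed

lemma coset_sub: "f2subspace k S \<Longrightarrow> v \<in> Vec k \<Longrightarrow> coset S v \<subseteq> Vec k"
  unfolding f2subspace_def coset_def by (auto intro: Vec_add)

lemma subspace_pow2: assumes S: "f2subspace k S" shows "\<exists>d. card S = 2 ^ d"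
proof -
  define C where "C = coset S ` Vec k"
  have SV: "S \<subseteq> Vec k" using S by (simp add: f2subspace_def)
  have UC: "\<Union>C = Vec k"
  proof
    show "\<Union>C \<subseteq> Vec k" using coset_sub[OF S] by (auto simp: C_def)
    show "Vec k \<subseteq> \<Union>C"
    proof
      fix x assume "x \<in> Vec k"
      moreover have "x \<in> coset S x" using S by (simp add: coset_mem f2subspace_def)
      ultimately show "x \<in> \<Union>C" by (auto simp: C_def)
    qed
  qed
  have f1: "finite C" by (simp add: C_def)
  have f2: "finite (\<Union>C)" using UC by simp
  have f3: "\<forall>c\<in>C. card c = card S" by (auto simp: C_def coset_card)
  have f4: "\<forall>c1\<in>C. \<forall>c2\<in>C. c1 \<noteq> c2 \<longrightarrow> c1 \<inter> c2 = {}"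
    proof (intro ballI impI)
      fix c1 c2 assume c1: "c1 \<in> C" and c2: "c2 \<in> C" and ne: "c1 \<noteq> c2"
      obtain v1 v2 where v: "c1 = coset S v1" "c2 = coset S v2" using c1 c2 by (auto simp: C_def)
      show "c1 \<inter> c2 = {}"
      proof (rule ccontr)
        assume "c1 \<inter> c2 \<noteq> {}"
        then obtain x where "vadd x v1 \<in> S" "vadd x v2 \<in> S" using v by (auto simp: coset_mem)
        hence "vadd (vadd x v1) (vadd x v2) \<in> S" using S by (simp add: f2subspace_def)
        hence "vadd v1 v2 \<in> S"
          by (simp add: vadd_swap)
        hence "c1 = c2" using coset_eq[OF S] v by simp
        thus False using ne by simp
      qed
    qed
  have "card S * card C = card (\<Union>C)"
    by (rule card_partition[OF f1 f2]) (use f3 f4 in auto)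
  hence "card S dvd 2 ^ k" using UC card_Vec[of k] by (metis dvd_triv_left)
  thus ?thesis using divides_primepow_nat[of 2] by auto
qed

lemma card_f2dim: assumes "f2subspace k S" shows "card S = 2 ^ f2dim S"
proof -
  obtain d where d: "card S = 2 ^ d" using subspace_pow2[OF assms] by blast
  have "f2dim S = d" unfolding f2dim_def
    by (rule the_equality) (use d in \<open>auto simp: power_inject_exp\<close>)
  thus ?thesis using d by simp
qed


definition emb :: "nat \<Rightarrow> nat \<Rightarrow> nat \<Rightarrow> (nat \<Rightarrow> bit) \<Rightarrow> (nat \<Rightarrow> bit)" where
  "emb m b j z = (\<lambda>k. if k < m * b \<and> k div m = j then z (k mod m) else 0)"

lemma bp_Vec: "block_proj m j x \<in> Vec m"
  unfolding block_proj_def Vec_def by simp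

lemma emb_Vec: "emb m b j z \<in> Vec (m * b)"
  unfolding emb_def Vec_def by simp

lemma idx_lt: "j < b \<Longrightarrow> k < (m::nat) \<Longrightarrow> j * m + k < m * b"
proof -
  assume "j < b" "k < m"
  hence "j * m + k < j * m + m" by simp
  also have "\<dots> = (j + 1) * m" by simp
  also have "\<dots> \<le> b * m" using \<open>j < b\<close> by (intro mult_right_mono) auto
  finally show ?thesis by (simp add: mult.commute)
qed

lemma bp_emb_same: "j < b \<Longrightarrow> z \<in> Vec m \<Longrightarrow> block_proj m j (emb m b j z) = z"
  unfolding block_proj_def emb_def
  by (rule ext) (auto simp: idx_lt Vec_def)

lemma bp_emb_other: "i \<noteq> j \<Longrightarrow> block_proj m i (emb m b j z) = vzero"
  unfolding block_proj_def emb_def vzero_def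
  by (rule ext) auto

lemma emb_add: "emb m b j (vadd y z) = vadd (emb m b j y) (emb m b j z)"
  unfolding emb_def vadd_def by (rule ext) auto

lemma emb_zero[simp]: "emb m b j vzero = vzero"
  unfolding emb_def vzero_def by (rule ext) auto

lemma bp_add: "block_proj m j (vadd x y) = vadd (block_proj m j x) (block_proj m j y)"
  unfolding block_proj_def vadd_def by (rule ext) auto

lemma bp_zero[simp]: "block_proj m j vzero = vzero"
  unfolding block_proj_def vzero_def by (rule ext) auto

lemma par_Vec: "parallel m b g x \<in> Vec (m * b)"
  unfolding parallel_def Vec_def by simp

lemma par_bp:
  assumes "i < b" "g i ` Vec m \<subseteq> Vec m"
  shows "block_proj m i (parallel m b g x) = g i (block_proj m i x)"
proof
  fix k
  have gv: "g i (block_proj m i x) \<in> Vec m" using assms(2) bp_Vec by blast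
  show "block_proj m i (parallel m b g x) k = g i (block_proj m i x) k"
  proof (cases "k < m")
    case True
    have d: "(i * m + k) div m = i" "(i * m + k) mod m = k" using True by auto
    show ?thesis using assms(1) True unfolding block_proj_def parallel_def
      by (simp add: idx_lt) (simp only: d)
  next
    case False
    then show ?thesis using gv unfolding block_proj_def Vec_def by simp
  qed
qed

lemma coord_bp: "0 < (m::nat) \<Longrightarrow> x k = block_proj m (k div m) x (k mod m)"
  unfolding block_proj_def by (simp add: mult.commute)

lemma vec_eq_blocks:
  assumes "0 < m" "x \<in> Vec (m * b)" "y \<in> Vec (m * b)" "\<And>i. i < b \<Longrightarrow> block_proj m i x = block_proj m i y"
  shows "x = y"
proof
  fix k show "x k = y k"
  proof (cases "k < m * b")
    case True
    hence "k div m < b" by (simp add: less_mult_imp_div_less mult.commute)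
    thus ?thesis using coord_bp[OF assms(1), of x k] coord_bp[OF assms(1), of y k] assms(4) by metis
  next
    case False thus ?thesis using assms(2,3) by (simp add: Vec_def)
  qed
qed

lemma par_diff:
  assumes "j < b" "\<And>i. i < b \<Longrightarrow> i \<noteq> j \<Longrightarrow> block_proj m i x = block_proj m i y"
  shows "vadd (parallel m b g x) (parallel m b g y) = emb m b j (vadd (g j (block_proj m j x)) (g j (block_proj m j y)))"
proof
  fix k
  show "vadd (parallel m b g x) (parallel m b g y) k = emb m b j (vadd (g j (block_proj m j x)) (g j (block_proj m j y))) k"
  proof (cases "k < m * b")
    case True
    hence lt: "k div m < b" by (simp add: less_mult_imp_div_less mult.commute)
    show ?thesis
    proof (cases "k div m = j")
      case True thus ?thesis using \<open>k < m * b\<close> unfolding parallel_def vadd_def emb_def by simp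
    next
      case False
      hence "block_proj m (k div m) x = block_proj m (k div m) y" using assms(2) lt by blast
      thus ?thesis using \<open>k < m * b\<close> False unfolding parallel_def vadd_def emb_def by simp
    qed
  next
    case False thus ?thesis unfolding parallel_def vadd_def emb_def by simp
  qed
qed

lemma par_emb:
  assumes "j < b" "z \<in> Vec m" "g j vzero = vzero" "parallel m b g vzero = vzero"
  shows "parallel m b g (emb m b j z) = emb m b j (g j z)"
proof -
  have "vadd (parallel m b g (emb m b j z)) (parallel m b g vzero) = emb m b j (vadd (g j (block_proj m j (emb m b j z))) (g j (block_proj m j vzero)))"
    by (rule par_diff[OF assms(1)]) (simp add: bp_emb_other)
  thus ?thesis using assms by (simp add: bp_emb_same)
qed

lemma emb_bp:
  assumes "0 < m" "x \<in> blocks m b {j}" shows "emb m b j (block_proj m j x) = x"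
proof
  fix k
  show "emb m b j (block_proj m j x) k = x k"
  proof (cases "k < m * b \<and> k div m = j")
    case True thus ?thesis using coord_bp[OF assms(1), of x k] unfolding emb_def by simp
  next
    case False thus ?thesis using assms(2) unfolding emb_def blocks_def Vec_def by auto
  qed
qed

lemma emb_in_block: "emb m b j z \<in> blocks m b {j}"
  unfolding blocks_def using emb_Vec by (auto simp: emb_def)


lemma count_fib:
  assumes "finite A" "X \<subseteq> A" "\<forall>x\<in>X. h x \<in> T" "finite T" "\<forall>c\<in>T. card {x\<in>A. h x = c} \<le> K"
  shows "card X \<le> K * card T"
proof -
  have "X \<subseteq> (\<Union>c\<in>T. {x\<in>A. h x = c})" using assms(2,3) by auto
  hence "card X \<le> card (\<Union>c\<in>T. {x\<in>A. h x = c})"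
    by (rule card_mono[rotated]) (use assms(1,4) in auto)
  also have "\<dots> \<le> (\<Sum>c\<in>T. card {x\<in>A. h x = c})" by (rule card_UN_le[OF assms(4)])
  also have "\<dots> \<le> (\<Sum>c\<in>T. K)" by (rule sum_mono) (use assms(5) in auto)
  also have "\<dots> = K * card T" by simp
  finally show ?thesis .
qed

lemma diff_bound:
  assumes "diff_uniform m f d" "a \<in> Vec m" "a \<noteq> vzero" "c \<in> Vec m"
  shows "card {x\<in>Vec m. vadd (f (vadd x a)) (f x) = c} \<le> d"
proof -
  let ?S = "{card {x \<in> Vec m. vadd (f (vadd x a)) (f x) = c} | a c.
                 a \<in> Vec m \<and> a \<noteq> vzero \<and> c \<in> Vec m}"
  have "?S \<subseteq> (\<lambda>(a,c). card {x \<in> Vec m. vadd (f (vadd x a)) (f x) = c}) ` (Vec m \<times> Vec m)"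
    by auto
  hence fin: "finite ?S" by (rule finite_subset) simp
  have "card {x\<in>Vec m. vadd (f (vadd x a)) (f x) = c} \<in> ?S" using assms(2-4) by blast
  hence "card {x\<in>Vec m. vadd (f (vadd x a)) (f x) = c} \<le> Max ?S" by (rule Max_ge[OF fin])
  thus ?thesis using assms(1) unfolding diff_uniform_def by simp
qed

lemma half_space:
  assumes U: "f2subspace n U" and cU: "card U = 2 ^ (n - 1)" and n: "n \<ge> 1"
    and vb: "vbar \<in> Vec n" "vbar \<notin> U" and x: "x \<in> Vec n" "x \<notin> U"
  shows "vadd x vbar \<in> U"
proof -
  have cl: "\<And>x y. x \<in> U \<Longrightarrow> y \<in> U \<Longrightarrow> vadd x y \<in> U" and UV: "U \<subseteq> Vec n"
    using U unfolding f2subspace_def by auto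
  have disj: "U \<inter> coset U vbar = {}"
  proof (rule ccontr)
    assume "U \<inter> coset U vbar \<noteq> {}"
    then obtain y where y: "y \<in> U" "vadd y vbar \<in> U" by (auto simp: coset_mem)
    hence "vadd y (vadd y vbar) \<in> U" by (rule cl)
    thus False using vb by simp
  qed
  have sub: "U \<union> coset U vbar \<subseteq> Vec n" using UV coset_sub[OF U vb(1)] by blast
  have finU: "finite U" using finite_subset[OF UV finite_Vec] .
  have "card (U \<union> coset U vbar) = card U + card (coset U vbar)"
    by (rule card_Un_disjoint[OF finU _ disj]) (simp add: coset_def finU)
  also have "\<dots> = 2 * 2 ^ (n - 1)" using cU by (simp add: coset_card)
  also have "\<dots> = 2 ^ n" using n by (cases n) simp_all
  finally have "U \<union> coset U vbar = Vec n"
    using sub card_Vec[of n] by (intro card_subset_eq) simp_all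
  hence "x \<in> coset U vbar" using x by blast
  thus ?thesis by (simp only: coset_mem)
qed

lemma half_block:
  assumes half: "\<forall>x\<in>Vec (m * b). x \<notin> U \<longrightarrow> vadd x vbar \<in> U"
    and cl: "\<And>x y. x \<in> U \<Longrightarrow> y \<in> U \<Longrightarrow> vadd x y \<in> U"
    and y0: "y0 \<in> Vec m" "emb m b j y0 \<notin> U" and m: "m \<ge> 1"
  shows "2 ^ (m - 1) \<le> card {z\<in>Vec m. emb m b j z \<in> U}"
proof -
  define H where "H = {z\<in>Vec m. emb m b j z \<in> U}"
  define C where "C = Vec m - H"
  have map: "(\<lambda>z. vadd z y0) ` C \<subseteq> H"
  proof
    fix t assume "t \<in> (\<lambda>z. vadd z y0) ` C"
    then obtain z where z: "z \<in> C" "t = vadd z y0" by blast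
    hence z: "z \<in> Vec m" "emb m b j z \<notin> U" "t = vadd z y0" by (auto simp: C_def H_def)
    have a1: "vadd (emb m b j z) vbar \<in> U" using half z(2) emb_Vec[of m b j z] by blast
    have a2: "vadd (emb m b j y0) vbar \<in> U" using half y0(2) emb_Vec[of m b j y0] by blast
    have "vadd (vadd (emb m b j z) vbar) (vadd (emb m b j y0) vbar) \<in> U" using cl a1 a2 by blast
    moreover have "vadd (vadd (emb m b j z) vbar) (vadd (emb m b j y0) vbar) = emb m b j t"
      using z(3) by (simp only: emb_add vadd_swap2)
    ultimately have "emb m b j t \<in> U" by simp
    thus "t \<in> H" using z y0 by (simp add: H_def Vec_add)
  qed
  have "inj_on (\<lambda>z. vadd z y0) C" by (auto simp: inj_on_def vadd_inj)
  have HV: "H \<subseteq> Vec m" by (auto simp: H_def)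
  have finH: "finite H" using finite_subset[OF HV finite_Vec] .
  have "card ((\<lambda>z. vadd z y0) ` C) \<le> card H" by (rule card_mono[OF finH map])
  hence c1: "card C \<le> card H" using card_image[OF \<open>inj_on (\<lambda>z. vadd z y0) C\<close>] by simp
  have c2: "card C = 2 ^ m - card H"
    unfolding C_def using card_Vec[of m] card_Diff_subset[OF finH HV] by simp
  have c3: "card H \<le> 2 ^ m" using card_mono[OF finite_Vec HV] card_Vec[of m] by simp
  have "2 ^ m \<le> 2 * card H" using c1 c2 c3 by linarith
  moreover have "(2::nat) ^ m = 2 * 2 ^ (m - 1)" using m by (cases m) simp_all
  ultimately show ?thesis unfolding H_def by simp
qed


lemma Vec_lt: "x \<in> Vec n \<Longrightarrow> x k \<noteq> 0 \<Longrightarrow> k < n"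
  unfolding Vec_def using not_le by blast

lemma vadd_ac3: "vadd (vadd p q) r = vadd (vadd p r) q"
  unfolding vadd_def by (rule ext) (simp add: ac_simps)

lemma restr_in:
  assumes m0: "0 < m" and F: "finite F" "F \<subseteq> I" and x: "x \<in> Vec (m * b)"
    and W0: "vzero \<in> W" and Wcl: "\<And>x y. x \<in> W \<Longrightarrow> y \<in> W \<Longrightarrow> vadd x y \<in> W"
    and E: "\<And>j. j \<in> I \<Longrightarrow> emb m b j (block_proj m j x) \<in> W"
  shows "(\<lambda>k. if k div m \<in> F then x k else 0) \<in> W"
  using F
proof (induction F rule: finite_induct)
  case empty
  have "(\<lambda>k. if k div m \<in> {} then x k else 0) = vzero" by (simp add: vzero_def)
  thus ?case using W0 by simp
next
  case (insert j F)
  have "(\<lambda>k. if k div m \<in> insert j F then x k else 0)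
        = vadd (\<lambda>k. if k div m \<in> F then x k else 0) (emb m b j (block_proj m j x))"
  proof
    fix k
    show "(if k div m \<in> insert j F then x k else 0)
        = vadd (\<lambda>k. if k div m \<in> F then x k else 0) (emb m b j (block_proj m j x)) k"
    proof (cases "k div m = j")
      case True
      have "x k = (if k < m * b then block_proj m j x (k mod m) else 0)"
        using coord_bp[OF m0, of x k] True x by (auto simp: Vec_def)
      thus ?thesis using True insert(2) unfolding vadd_def emb_def by auto
    next
      case False
      thus ?thesis unfolding vadd_def emb_def by auto
    qed
  qed
  moreover have "(\<lambda>k. if k div m \<in> F then x k else 0) \<in> W" using insert by simp
  moreover have "emb m b j (block_proj m j x) \<in> W" using E insert(4) by simp
  ultimately show ?case using Wcl by simp
qed

theorem corollary3p9:
  fixes m b :: nat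
    and g :: "nat \<Rightarrow> (nat \<Rightarrow> bit) \<Rightarrow> (nat \<Rightarrow> bit)"
    and U W W1 W2 :: "(nat \<Rightarrow> bit) set"
    and vbar :: "nat \<Rightarrow> bit"
  assumes "m > 1" and "b > 1"
    and perm: "\<And>i. i < b \<Longrightarrow> bij_betw (g i) (Vec m) (Vec m)"
    and zero: "parallel m b g vzero = vzero"
    and U: "f2subspace (m * b) U" "f2dim U = m * b - 1"
    and notJ: "\<And>i. i < b \<Longrightarrow> i \<notin> J_set m b U \<Longrightarrow>
        \<exists>r. r < m \<and> diff_uniform m (g i) (2 ^ r)
            \<and> strongly_anti_invariant m (g i) (int r - 1)"
    and inJ: "\<And>j. j \<in> J_set m b U \<Longrightarrow>
        \<exists>r. r < m - 1 \<and> diff_uniform m (g j) (2 ^ r)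
            \<and> strongly_anti_invariant m (g j) (int r)"
    and W: "f2subspace (m * b) W"
    and W1: "f2subspace (m * b) W1" "W1 \<subseteq> U"
    and W2: "f2subspace (m * b) W2" "W2 \<subseteq> U"
    and vbar: "vbar \<in> Vec (m * b)" "vbar \<notin> U"
    and maps: "maps_partition (parallel m b g) (Lpart (m * b) W) (LApart U W1 W2 vbar)"
    and nontriv: "\<not> trivial_partition (Vec (m * b)) (LApart U W1 W2 vbar)"
  shows "is_wall m b W \<and> is_wall m b W1 \<and> is_wall m b W2 \<and> W = W1 \<and> W1 = W2
         \<and> linear_partition (m * b) (LApart U W1 W2 vbar)"
proof -
  define n where "n = m * b"
  define P where "P = parallel m b g"
  have m0: "0 < m" using assms(1) by simp
  have n1: "n \<ge> 1" using assms(1,2) by (simp add: n_def)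
  have gimg: "\<And>i. i < b \<Longrightarrow> g i ` Vec m = Vec m" using perm by (simp add: bij_betw_def)
  have ginj: "\<And>i. i < b \<Longrightarrow> inj_on (g i) (Vec m)" using perm by (simp add: bij_betw_def)
  have gsub: "\<And>i. i < b \<Longrightarrow> g i ` Vec m \<subseteq> Vec m" using gimg by blast
  have pbp: "\<And>i x. i < b \<Longrightarrow> block_proj m i (P x) = g i (block_proj m i x)"
    unfolding P_def by (rule par_bp) (use gsub in auto)
  have g0: "\<And>i. i < b \<Longrightarrow> g i vzero = vzero"
  proof -
    fix i assume i: "i < b"
    have "block_proj m i (P vzero) = g i vzero"
      using pbp[OF i] by simp
    thus "g i vzero = vzero" using zero by (simp add: P_def)
  qed
  have PV: "\<And>x. P x \<in> Vec n" by (simp add: P_def n_def par_Vec)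
  have Pinj: "inj_on P (Vec n)"
  proof (rule inj_onI)
    fix x y assume x: "x \<in> Vec n" and y: "y \<in> Vec n" and e: "P x = P y"
    show "x = y"
    proof (rule vec_eq_blocks[OF m0])
      show "x \<in> Vec (m * b)" "y \<in> Vec (m * b)" using x y by (simp_all add: n_def)
      fix i assume i: "i < b"
      have "g i (block_proj m i x) = g i (block_proj m i y)"
        using e pbp[OF i, of x] pbp[OF i, of y] by simp
      thus "block_proj m i x = block_proj m i y" using ginj[OF i] bp_Vec by (metis inj_onD)
    qed
  qed
  have Pimg: "P ` Vec n = Vec n"
    by (rule endo_inj_surj[OF finite_Vec _ Pinj]) (use PV in blast)
  have P0: "P vzero = vzero" using zero by (simp add: P_def)
  have Ucl: "\<And>x y. x \<in> U \<Longrightarrow> y \<in> U \<Longrightarrow> vadd x y \<in> U" and UV: "U \<subseteq> Vec n" and U0: "vzero \<in> U"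
    using U(1) by (auto simp: f2subspace_def n_def)
  have Wcl: "\<And>x y. x \<in> W \<Longrightarrow> y \<in> W \<Longrightarrow> vadd x y \<in> W" and WV: "W \<subseteq> Vec n" and W0: "vzero \<in> W"
    using W by (auto simp: f2subspace_def n_def)
  have W1cl: "\<And>x y. x \<in> W1 \<Longrightarrow> y \<in> W1 \<Longrightarrow> vadd x y \<in> W1" and W1V: "W1 \<subseteq> Vec n" and W10: "vzero \<in> W1"
    using W1 by (auto simp: f2subspace_def n_def)
  have W2cl: "\<And>x y. x \<in> W2 \<Longrightarrow> y \<in> W2 \<Longrightarrow> vadd x y \<in> W2" and W2V: "W2 \<subseteq> Vec n" and W20: "vzero \<in> W2"
    using W2 by (auto simp: f2subspace_def n_def)
  have finW: "finite W" using finite_subset[OF WV finite_Vec] .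
  have blk: "\<And>v. v \<in> Vec n \<Longrightarrow> (\<exists>u\<in>U. P ` coset W v = coset W1 u) \<or> (\<exists>u\<in>U. P ` coset W v = coset (coset W2 vbar) u)"
  proof -
    fix v assume "v \<in> Vec n"
    hence "coset W v \<in> Lpart (m * b) W" by (simp add: Lpart_def n_def)
    hence "P ` coset W v \<in> LApart U W1 W2 vbar" using maps by (auto simp: maps_partition_def P_def)
    thus "(\<exists>u\<in>U. P ` coset W v = coset W1 u) \<or> (\<exists>u\<in>U. P ` coset W v = coset (coset W2 vbar) u)"
      by (auto simp: LApart_def)
  qed
  have vbU: "\<And>y. y \<in> U \<Longrightarrow> vadd y vbar \<in> U \<Longrightarrow> False"
  proof -
    fix y assume "y \<in> U" "vadd y vbar \<in> U"
    hence "vadd y (vadd y vbar) \<in> U" by (rule Ucl)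
    thus False using vbar by simp
  qed
  have T1: "\<And>v w. v \<in> Vec n \<Longrightarrow> w \<in> W \<Longrightarrow> P v \<in> U \<Longrightarrow> vadd (P (vadd v w)) (P v) \<in> W1"
  proof -
    fix v w assume v: "v \<in> Vec n" and w: "w \<in> W" and Pv: "P v \<in> U"
    have i1: "P v \<in> P ` coset W v" using W0 by (auto simp: coset_mem)
    have i2: "P (vadd v w) \<in> P ` coset W v" using w
      by (intro imageI) (simp add: coset_mem vadd_comm[of v w])
    from blk[OF v] show "vadd (P (vadd v w)) (P v) \<in> W1"
    proof
      assume "\<exists>u\<in>U. P ` coset W v = coset W1 u"
      then obtain u where u: "P ` coset W v = coset W1 u" by blast
      have "vadd (vadd (P (vadd v w)) u) (vadd (P v) u) \<in> W1"
        using i1 i2 u W1cl by (simp add: coset_mem)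
      thus ?thesis by (simp only: vadd_swap2)
    next
      assume "\<exists>u\<in>U. P ` coset W v = coset (coset W2 vbar) u"
      then obtain u where u: "u \<in> U" "P ` coset W v = coset (coset W2 vbar) u" by blast
      have "vadd (vadd (P v) u) vbar \<in> W2" using i1 u by (simp add: coset_mem)
      hence "vadd (vadd (P v) u) vbar \<in> U" using W2 by blast
      moreover have "vadd (P v) u \<in> U" using Ucl[OF Pv u(1)] .
      ultimately show ?thesis using vbU by blast
    qed
  qed
  have PW: "P ` W = W1"
  proof -
    have cW: "coset W vzero = W" by (rule coset_self[OF W W0])
    have i1: "vzero \<in> P ` W" using W0 P0 by (metis imageI)
    from blk[OF Vec_zero[of n]] show ?thesis unfolding cW
    proof
      assume "\<exists>u\<in>U. P ` W = coset W1 u"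
      then obtain u where u: "P ` W = coset W1 u" by blast
      hence "u \<in> W1" using i1 by (simp add: coset_mem)
      thus ?thesis using u coset_self[OF W1(1)] by simp
    next
      assume "\<exists>u\<in>U. P ` W = coset (coset W2 vbar) u"
      then obtain u where u: "u \<in> U" "P ` W = coset (coset W2 vbar) u" by blast
      hence "vadd u vbar \<in> W2" using i1 by (simp add: coset_mem)
      hence "vadd u vbar \<in> U" using W2 by blast
      thus ?thesis using vbU u by blast
    qed
  qed
  have inW: "\<And>x. x \<in> Vec n \<Longrightarrow> P x \<in> W1 \<longleftrightarrow> x \<in> W"
  proof -
    fix x assume x: "x \<in> Vec n"
    show "P x \<in> W1 \<longleftrightarrow> x \<in> W"
    proof
      assume "P x \<in> W1"
      then obtain w where w: "w \<in> W" "P x = P w" using PW by auto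
      thus "x \<in> W" using inj_onD[OF Pinj w(2) x] WV by auto
    qed (use PW in auto)
  qed
  define A where "A j = {z\<in>Vec m. emb m b j z \<in> W}" for j
  define B where "B j = {z\<in>Vec m. emb m b j z \<in> W1}" for j
  have embV: "\<And>j z. emb m b j z \<in> Vec n" using emb_Vec by (simp add: n_def)
  have Pemb: "\<And>j z. j < b \<Longrightarrow> z \<in> Vec m \<Longrightarrow> P (emb m b j z) = emb m b j (g j z)"
    unfolding P_def by (rule par_emb) (use g0 zero in auto)
  have gV: "\<And>j z. j < b \<Longrightarrow> z \<in> Vec m \<Longrightarrow> g j z \<in> Vec m" using gsub by blast
  have subA: "\<And>j. f2subspace m (A j)"
    unfolding f2subspace_def A_def using W0 Wcl by (auto simp: emb_add Vec_add)
  have subB: "\<And>j. f2subspace m (B j)"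
    unfolding f2subspace_def B_def using W10 W1cl by (auto simp: emb_add Vec_add)
  have gAB: "\<And>j. j < b \<Longrightarrow> g j ` A j = B j"
  proof -
    fix j assume j: "j < b"
    have e: "\<And>z. z \<in> Vec m \<Longrightarrow> g j z \<in> B j \<longleftrightarrow> z \<in> A j"
    proof -
      fix z assume z: "z \<in> Vec m"
      have "P (emb m b j z) \<in> W1 \<longleftrightarrow> emb m b j z \<in> W" by (rule inW[OF embV])
      thus "g j z \<in> B j \<longleftrightarrow> z \<in> A j" using Pemb[OF j z] gV[OF j z] z by (simp add: A_def B_def)
    qed
    show "g j ` A j = B j"
    proof
      show "g j ` A j \<subseteq> B j" using e by (auto simp: A_def)
      show "B j \<subseteq> g j ` A j"
      proof
        fix y assume y: "y \<in> B j"
        hence "y \<in> g j ` Vec m" using gimg[OF j] by (simp add: B_def)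
        then obtain z where z: "z \<in> Vec m" "y = g j z" by blast
        thus "y \<in> g j ` A j" using e y by blast
      qed
    qed
  qed
  have finB: "\<And>j. finite (B j)" by (rule finite_subset[OF _ finite_Vec]) (auto simp: B_def)
  have B0: "\<And>j. vzero \<in> B j" using W10 by (simp add: B_def)
  have K1: "\<And>j a X r. j < b \<Longrightarrow> a \<in> A j \<Longrightarrow> a \<noteq> vzero \<Longrightarrow> X \<subseteq> Vec m
      \<Longrightarrow> (\<forall>x\<in>X. emb m b j (g j x) \<in> U) \<Longrightarrow> diff_uniform m (g j) (2 ^ r)
      \<Longrightarrow> card X \<le> 2 ^ r * (card (B j) - 1)"
  proof -
    fix j a X r assume j: "j < b" and a: "a \<in> A j" "a \<noteq> vzero" and X: "X \<subseteq> Vec m"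
      and XU: "\<forall>x\<in>X. emb m b j (g j x) \<in> U" and du: "diff_uniform m (g j) (2 ^ r)"
    have aV: "a \<in> Vec m" using a by (simp add: A_def)
    have "card X \<le> 2 ^ r * card (B j - {vzero})"
    proof (rule count_fib[OF finite_Vec X])
      show "finite (B j - {vzero})" using finB by simp
      show "\<forall>x\<in>X. vadd (g j (vadd x a)) (g j x) \<in> B j - {vzero}"
      proof
        fix x assume x: "x \<in> X"
        have xV: "x \<in> Vec m" using x X by blast
        have xa: "vadd x a \<in> Vec m" using xV aV by (rule Vec_add)
        have "vadd (P (vadd (emb m b j x) (emb m b j a))) (P (emb m b j x)) \<in> W1"
          by (rule T1) (use embV a XU x Pemb[OF j xV] in \<open>auto simp: A_def\<close>)
        hence "emb m b j (vadd (g j (vadd x a)) (g j x)) \<in> W1"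
          by (simp add: emb_add[symmetric] Pemb[OF j xV] Pemb[OF j xa])
        moreover have "vadd (g j (vadd x a)) (g j x) \<in> Vec m" using Vec_add[OF gV[OF j xa] gV[OF j xV]] .
        moreover have "vadd (g j (vadd x a)) (g j x) \<noteq> vzero"
        proof
          assume "vadd (g j (vadd x a)) (g j x) = vzero"
          hence "g j (vadd x a) = g j x" by (simp add: vadd_eq_zero)
          hence "vadd x a = x" using inj_onD[OF ginj[OF j] _ xa xV] by blast
          hence "vadd x (vadd x a) = vadd x x" by simp
          thus False using a(2) by simp
        qed
        ultimately show "vadd (g j (vadd x a)) (g j x) \<in> B j - {vzero}" by (simp add: B_def)
      qed
      show "\<forall>c\<in>B j - {vzero}. card {x \<in> Vec m. vadd (g j (vadd x a)) (g j x) = c} \<le> 2 ^ r"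
        using diff_bound[OF du aV a(2)] by (auto simp: B_def)
    qed
    thus "card X \<le> 2 ^ r * (card (B j) - 1)" using B0 finB by simp
  qed
  have K2: "\<And>j w X r. j < b \<Longrightarrow> w \<in> W \<Longrightarrow> block_proj m j w \<noteq> vzero \<Longrightarrow> X \<subseteq> Vec m
      \<Longrightarrow> (\<forall>x\<in>X. emb m b j (g j x) \<in> U) \<Longrightarrow> diff_uniform m (g j) (2 ^ r)
      \<Longrightarrow> card X \<le> 2 ^ r * card (B j)"
  proof -
    fix j w X r assume j: "j < b" and w: "w \<in> W" "block_proj m j w \<noteq> vzero" and X: "X \<subseteq> Vec m"
      and XU: "\<forall>x\<in>X. emb m b j (g j x) \<in> U" and du: "diff_uniform m (g j) (2 ^ r)"
    define a where "a = block_proj m j w"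
    have aV: "a \<in> Vec m" by (simp add: a_def bp_Vec)
    have wV: "w \<in> Vec n" using w WV by blast
    have gaV: "g j a \<in> Vec m" using gV[OF j aV] .
    have "card X \<le> 2 ^ r * card (coset (B j) (g j a))"
    proof (rule count_fib[OF finite_Vec X])
      show "finite (coset (B j) (g j a))" using finB by (simp add: coset_def)
      show "\<forall>x\<in>X. vadd (g j (vadd x a)) (g j x) \<in> coset (B j) (g j a)"
      proof
        fix x assume x: "x \<in> X"
        have xV: "x \<in> Vec m" using x X by blast
        have xa: "vadd x a \<in> Vec m" using xV aV by (rule Vec_add)
        have t1: "vadd (P (vadd (emb m b j x) w)) (P (emb m b j x)) \<in> W1"
          by (rule T1) (use embV w XU x Pemb[OF j xV] in auto)
        have t2: "P w \<in> W1" using PW w by blast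
        have t3: "vadd (P (vadd (emb m b j x) w)) (P w)
            = emb m b j (vadd (g j (block_proj m j (vadd (emb m b j x) w))) (g j (block_proj m j w)))"
          unfolding P_def by (rule par_diff[OF j]) (simp add: bp_add bp_emb_other)
        have t4: "block_proj m j (vadd (emb m b j x) w) = vadd x a"
          by (simp add: bp_add bp_emb_same[OF j xV] a_def)
        have "vadd (vadd (P (vadd (emb m b j x) w)) (P (emb m b j x))) (P w) \<in> W1"
          using W1cl[OF t1 t2] .
        hence "vadd (vadd (P (vadd (emb m b j x) w)) (P w)) (P (emb m b j x)) \<in> W1"
          by (simp only: vadd_ac3)
        hence e1: "emb m b j (vadd (vadd (g j (vadd x a)) (g j a)) (g j x)) \<in> W1"
          by (simp only: t3 t4 a_def[symmetric] Pemb[OF j xV] emb_add)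
        have eq: "vadd (vadd (g j (vadd x a)) (g j x)) (g j a) = vadd (vadd (g j (vadd x a)) (g j a)) (g j x)"
          by (rule vadd_ac3)
        have "emb m b j (vadd (vadd (g j (vadd x a)) (g j x)) (g j a)) \<in> W1" using e1 by (simp only: eq)
        moreover have "vadd (vadd (g j (vadd x a)) (g j x)) (g j a) \<in> Vec m"
          using Vec_add[OF Vec_add[OF gV[OF j xa] gV[OF j xV]] gaV] .
        ultimately show "vadd (g j (vadd x a)) (g j x) \<in> coset (B j) (g j a)"
          by (simp add: B_def coset_mem)
      qed
      show "\<forall>c\<in>coset (B j) (g j a). card {x \<in> Vec m. vadd (g j (vadd x a)) (g j x) = c} \<le> 2 ^ r"
        using diff_bound[OF du aV] w(2) coset_sub[OF subB gaV] by (auto simp: a_def)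
    qed
    thus "card X \<le> 2 ^ r * card (B j)" by (simp add: coset_card)
  qed
  have cardU: "card U = 2 ^ (n - 1)" using card_f2dim[OF U(1)] U(2) by (simp add: n_def)
  have half: "\<forall>x\<in>Vec (m * b). x \<notin> U \<longrightarrow> vadd x vbar \<in> U"
  proof (intro ballI impI)
    fix x assume "x \<in> Vec (m * b)" "x \<notin> U"
    thus "vadd x vbar \<in> U"
      using half_space[OF U(1)[folded n_def] cardU n1 vbar[folded n_def]] by (simp add: n_def)
  qed
  have sai: "\<And>j s. j < b \<Longrightarrow> strongly_anti_invariant m (g j) s \<Longrightarrow>
      int (f2dim (B j)) < int m - s \<or> (A j = Vec m \<and> B j = Vec m)"
  proof -
    fix j s assume j: "j < b" and s: "strongly_anti_invariant m (g j) s"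
    have "(f2dim (A j) = f2dim (B j) \<and> int (f2dim (A j)) < int m - s) \<or> (A j = Vec m \<and> B j = Vec m)"
      using s subA[of j] subB[of j] gAB[OF j] unfolding strongly_anti_invariant_def by blast
    thus "int (f2dim (B j)) < int m - s \<or> (A j = Vec m \<and> B j = Vec m)" by auto
  qed
  have cardB: "\<And>j. card (B j) = 2 ^ f2dim (B j)" using card_f2dim[OF subB] .
  have B1: "\<And>j. card (B j) \<ge> 1" using B0 finB by (metis card_0_eq empty_iff less_one not_le)
  have A0: "\<And>j. vzero \<in> A j" using W0 by (simp add: A_def)
  have Bz: "\<And>j. j < b \<Longrightarrow> A j = {vzero} \<Longrightarrow> B j = {vzero}"
    using gAB g0 by (metis image_empty image_insert)
  have CJ: "\<And>j w. j \<in> J_set m b U \<Longrightarrow> w \<in> W \<Longrightarrow> block_proj m j w = vzero"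
  proof -
    fix j w assume jJ: "j \<in> J_set m b U" and w: "w \<in> W"
    have j: "j < b" using jJ by (simp add: J_set_def)
    obtain r where r: "r < m - 1" and du: "diff_uniform m (g j) (2 ^ r)"
      and sa: "strongly_anti_invariant m (g j) (int r)" using inJ[OF jJ] by blast
    obtain y where y: "y \<in> Vblock m b j" "y \<notin> U" using jJ by (auto simp: J_set_def)
    define y0 where "y0 = block_proj m j y"
    have y0V: "y0 \<in> Vec m" by (simp add: y0_def bp_Vec)
    have ey: "emb m b j y0 = y" using emb_bp[OF m0] y(1) by (simp add: y0_def Vblock_def)
    define H where "H = {z\<in>Vec m. emb m b j z \<in> U}"
    have hH: "2 ^ (m - 1) \<le> card H" unfolding H_def
      by (rule half_block[OF half Ucl y0V]) (use ey y(2) assms(1) in auto)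
    define X where "X = {x\<in>Vec m. g j x \<in> H}"
    have XV: "X \<subseteq> Vec m" by (auto simp: X_def)
    have XU: "\<forall>x\<in>X. emb m b j (g j x) \<in> U" by (auto simp: X_def H_def)
    have gX: "g j ` X = H"
    proof
      show "g j ` X \<subseteq> H" by (auto simp: X_def)
      show "H \<subseteq> g j ` X"
      proof
        fix h assume h: "h \<in> H"
        hence "h \<in> g j ` Vec m" using gimg[OF j] by (simp add: H_def)
        then obtain x where "x \<in> Vec m" "h = g j x" by blast
        thus "h \<in> g j ` X" using h by (auto simp: X_def)
      qed
    qed
    have cX: "card X = card H"
      using card_image[OF inj_on_subset[OF ginj[OF j] XV]] gX by simp
    have pw: "(2::nat) ^ r * 2 ^ (m - r - 1) = 2 ^ (m - 1)"
      using r by (simp add: power_add[symmetric])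
    have AJ: "A j = {vzero}"
    proof (rule ccontr)
      assume "A j \<noteq> {vzero}"
      then obtain a where a: "a \<in> A j" "a \<noteq> vzero" using A0 by blast
      have k: "card X \<le> 2 ^ r * (card (B j) - 1)" by (rule K1[OF j a XV XU du])
      from sai[OF j sa] show False
      proof
        assume "int (f2dim (B j)) < int m - int r"
        hence "f2dim (B j) \<le> m - r - 1" by linarith
        hence "card (B j) \<le> 2 ^ (m - r - 1)" unfolding cardB by (rule power_increasing) simp
        hence "2 ^ r * card (B j) \<le> (2::nat) ^ (m - 1)" using pw
          by (metis mult_le_mono2)
        moreover have "2 ^ r * (card (B j) - 1) < 2 ^ r * card (B j)" using B1[of j] by simp
        ultimately show False using k cX hH by linarith
      next
        assume "A j = Vec m \<and> B j = Vec m"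
        hence "y0 \<in> B j" using y0V by simp
        hence "y \<in> W1" using ey by (simp add: B_def)
        thus False using y(2) W1(2) by blast
      qed
    qed
    show "block_proj m j w = vzero"
    proof (rule ccontr)
      assume "block_proj m j w \<noteq> vzero"
      hence "card X \<le> 2 ^ r * card (B j)" by (rule K2[OF j w _ XV XU du])
      hence "card X \<le> 2 ^ r" using Bz[OF j AJ] by simp
      moreover have "(2::nat) ^ r < 2 ^ (m - 1)" using r by (intro power_strict_increasing) auto
      ultimately show False using cX hH by linarith
    qed
  qed
  have CN: "\<And>j w. j < b \<Longrightarrow> j \<notin> J_set m b U \<Longrightarrow> w \<in> W \<Longrightarrow> block_proj m j w \<noteq> vzero \<Longrightarrow> A j = Vec m"
  proof -
    fix j w assume j: "j < b" and jJ: "j \<notin> J_set m b U" and w: "w \<in> W" "block_proj m j w \<noteq> vzero"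
    obtain r where r: "r < m" and du: "diff_uniform m (g j) (2 ^ r)"
      and sa: "strongly_anti_invariant m (g j) (int r - 1)" using notJ[OF j jJ] by blast
    have "Vblock m b j \<subseteq> U" using jJ j unfolding J_set_def by blast
    hence VU: "\<And>z. emb m b j z \<in> U" using emb_in_block by (auto simp: Vblock_def)
    have XU: "\<forall>x\<in>Vec m. emb m b j (g j x) \<in> U" using VU by blast
    have pw: "(2::nat) ^ r * 2 ^ (m - r) = 2 ^ m"
      using r by (simp add: power_add[symmetric])
    show "A j = Vec m"
    proof (cases "A j = {vzero}")
      case True
      have "card (Vec m) \<le> 2 ^ r * card (B j)" by (rule K2[OF j w order_refl XU du])
      hence "2 ^ m \<le> (2::nat) ^ r" using Bz[OF j True] card_Vec[of m] by simp
      moreover have "(2::nat) ^ r < 2 ^ m" using r by (intro power_strict_increasing) auto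
      ultimately show ?thesis by linarith
    next
      case False
      then obtain a where a: "a \<in> A j" "a \<noteq> vzero" using A0 by blast
      have k: "card (Vec m) \<le> 2 ^ r * (card (B j) - 1)" by (rule K1[OF j a order_refl XU du])
      from sai[OF j sa] show ?thesis
      proof
        assume "int (f2dim (B j)) < int m - (int r - 1)"
        hence "f2dim (B j) \<le> m - r" by linarith
        hence "card (B j) \<le> 2 ^ (m - r)" unfolding cardB by (rule power_increasing) simp
        hence "2 ^ r * card (B j) \<le> (2::nat) ^ m" using pw
          by (metis mult_le_mono2)
        moreover have "2 ^ r * (card (B j) - 1) < 2 ^ r * card (B j)" using B1[of j] by simp
        ultimately show ?thesis using k card_Vec[of m] by linarith
      qed simp
    qed
  qed
  define I where "I = {j. j < b \<and> (\<exists>w\<in>W. block_proj m j w \<noteq> vzero)}"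
  have Ib: "I \<subseteq> {..<b}" by (auto simp: I_def)
  have AI: "\<And>j. j \<in> I \<Longrightarrow> A j = Vec m"
  proof -
    fix j assume "j \<in> I"
    then obtain w where j: "j < b" and w: "w \<in> W" "block_proj m j w \<noteq> vzero" by (auto simp: I_def)
    have "j \<notin> J_set m b U" using CJ w by blast
    thus "A j = Vec m" using CN[OF j _ w] by blast
  qed
  have WI: "W = blocks m b I"
  proof
    show "W \<subseteq> blocks m b I"
    proof
      fix w assume w: "w \<in> W"
      have wV: "w \<in> Vec (m * b)" using w WV by (simp add: n_def subset_eq)
      have "k div m \<in> I" if k: "w k \<noteq> 0" for k
      proof -
        have "k < m * b" using Vec_lt[OF wV k] .
        hence kb: "k div m < b" by (simp add: less_mult_imp_div_less mult.commute)
        have "block_proj m (k div m) w (k mod m) \<noteq> 0" using coord_bp[OF m0, of w k] k by simp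
        hence "block_proj m (k div m) w \<noteq> vzero" by (auto simp: vzero_def)
        thus ?thesis using kb w by (auto simp: I_def)
      qed
      thus "w \<in> blocks m b I" using wV by (auto simp: blocks_def)
    qed
    show "blocks m b I \<subseteq> W"
    proof
      fix x assume x: "x \<in> blocks m b I"
      have xV: "x \<in> Vec (m * b)" using x by (simp add: blocks_def)
      have "(\<lambda>k. if k div m \<in> I then x k else 0) \<in> W"
      proof (rule restr_in[OF m0 finite_subset[OF Ib finite_lessThan] order_refl xV W0 Wcl])
        fix j assume "j \<in> I"
        hence "block_proj m j x \<in> A j" using AI bp_Vec by blast
        thus "emb m b j (block_proj m j x) \<in> W" by (simp add: A_def)
      qed
      moreover have "(\<lambda>k. if k div m \<in> I then x k else 0) = x"
        using x by (auto simp: blocks_def fun_eq_iff)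
      ultimately show "x \<in> W" by simp
    qed
  qed
  have bp0: "\<And>w i. w \<in> W \<Longrightarrow> i \<notin> I \<Longrightarrow> block_proj m i w = vzero"
  proof -
    fix w i assume w: "w \<in> W" and i: "i \<notin> I"
    show "block_proj m i w = vzero"
    proof
      fix k
      show "block_proj m i w k = vzero k"
      proof (cases "k < m")
        case True
        have "(i * m + k) div m = i" using True by simp
        hence "w (i * m + k) = 0" using w i WI by (auto simp: blocks_def)
        thus ?thesis using True by (simp add: block_proj_def vzero_def)
      qed (simp add: block_proj_def vzero_def)
    qed
  qed
  have Pk: "\<And>x k. k < m * b \<Longrightarrow> P x k = g (k div m) (block_proj m (k div m) x) (k mod m)"
    by (simp add: P_def parallel_def)
  have kb: "\<And>k. k < m * b \<Longrightarrow> k div m < b" by (simp add: less_mult_imp_div_less mult.commute)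
  have Inz: "I \<noteq> {}"
  proof
    assume "I = {}"
    hence W0only: "W = {vzero}" using WI W0 by (auto simp: blocks_def vzero_def)
    have cs: "\<And>v. coset W v = {v}" using W0only by (simp add: coset_def)
    have "LApart U W1 W2 vbar = (\<lambda>X. P ` X) ` Lpart (m * b) W" using maps by (simp add: maps_partition_def P_def)
    also have "\<dots> = (\<lambda>v. {P v}) ` Vec n" by (auto simp: Lpart_def cs n_def image_image)
    also have "\<dots> = (\<lambda>v. {v}) ` (P ` Vec n)" by (simp add: image_image)
    finally have "LApart U W1 W2 vbar = (\<lambda>v. {v}) ` Vec (m * b)" using Pimg by (simp add: n_def)
    thus False using nontriv by (simp add: trivial_partition_def)
  qed
  have Inall: "I \<noteq> {..<b}"
  proof
    assume "I = {..<b}"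
    have "Vec n \<subseteq> W"
    proof
      fix x assume x: "x \<in> Vec n"
      have "\<forall>k. x k \<noteq> 0 \<longrightarrow> k div m \<in> I"
        using Vec_lt[OF x] kb \<open>I = {..<b}\<close> by (auto simp: n_def)
      thus "x \<in> W" using x WI by (simp add: blocks_def n_def)
    qed
    hence "W = Vec n" using WV by blast
    hence "W1 = Vec n" using PW Pimg by simp
    thus False using vbar W1(2) by (auto simp: n_def)
  qed
  have wall: "is_wall m b W" unfolding is_wall_def using Ib Inz Inall WI by blast
  have PWsub: "P ` W \<subseteq> W"
  proof
    fix y assume "y \<in> P ` W"
    then obtain w where w: "w \<in> W" "y = P w" by blast
    have "\<forall>k. y k \<noteq> 0 \<longrightarrow> k div m \<in> I"
    proof (intro allI impI)
      fix k assume k: "y k \<noteq> 0"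
      have kl: "k < m * b" using Vec_lt[OF PV[of w], of k] k w(2) by (simp add: n_def)
      show "k div m \<in> I"
      proof (rule ccontr)
        assume "k div m \<notin> I"
        hence "y k = 0" using Pk[OF kl] bp0[OF w(1)] g0[OF kb[OF kl]] w(2) by (simp add: vzero_def)
        thus False using k by simp
      qed
    qed
    thus "y \<in> W" using PV[of w] w(2) WI by (simp add: blocks_def n_def)
  qed
  have cardPW: "card (P ` W) = card W" using card_image[OF inj_on_subset[OF Pinj WV]] .
  have W1W: "W1 = W" using PW card_subset_eq[OF finW PWsub cardPW] by simp
  have cosP: "\<And>v. v \<in> Vec n \<Longrightarrow> P ` coset W v = coset W (P v)"
  proof -
    fix v assume v: "v \<in> Vec n"
    have sub: "P ` coset W v \<subseteq> coset W (P v)"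
    proof
      fix y assume "y \<in> P ` coset W v"
      then obtain w where w: "w \<in> W" "y = P (vadd w v)" by (auto simp: coset_def)
      have "vadd y (P v) \<in> blocks m b I"
      proof -
        have "vadd y (P v) \<in> Vec (m * b)" using Vec_add[OF PV PV] w(2) by (simp add: n_def)
        moreover have "k div m \<in> I" if k: "vadd y (P v) k \<noteq> 0" for k
        proof (rule ccontr)
          assume ni: "k div m \<notin> I"
          have kl: "k < m * b" using Vec_lt[OF Vec_add[OF PV[of "vadd w v"] PV[of v]], of k] k w(2) by (simp add: n_def)
          have "block_proj m (k div m) (vadd w v) = block_proj m (k div m) v"
            using bp0[OF w(1) ni] by (simp add: bp_add)
          hence "y k = P v k" using Pk[OF kl] w(2) by simp
          thus False using k by (simp add: vadd_def)
        qed
        ultimately show ?thesis by (auto simp: blocks_def)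
      qed
      thus "y \<in> coset W (P v)" using WI by (simp add: coset_mem)
    qed
    have cs: "coset W v \<subseteq> Vec n" by (rule coset_sub[OF W[folded n_def] v])
    have "card (P ` coset W v) = card (coset W (P v))"
      using card_image[OF inj_on_subset[OF Pinj cs]] by (simp add: coset_card)
    moreover have "finite (coset W (P v))" using finW by (simp add: coset_def)
    ultimately show "P ` coset W v = coset W (P v)" using card_subset_eq sub by blast
  qed
  have LAeq: "LApart U W1 W2 vbar = Lpart (m * b) W"
  proof -
    have "LApart U W1 W2 vbar = (\<lambda>X. P ` X) ` Lpart (m * b) W" using maps by (simp add: maps_partition_def P_def)
    also have "\<dots> = (\<lambda>v. coset W (P v)) ` Vec n" using cosP by (auto simp: Lpart_def n_def image_image)
    also have "\<dots> = coset W ` (P ` Vec n)" by (simp add: image_image)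
    finally show ?thesis using Pimg by (simp add: Lpart_def n_def)
  qed
  have W2W: "W2 = W"
  proof -
    obtain v0 where v0: "v0 \<in> Vec n" "P v0 = vbar" using Pimg vbar(1) by (metis imageE n_def)
    have vbW: "vbar \<in> coset W vbar" using W0 by (simp add: coset_mem)
    have ci: "P ` coset W v0 = coset W vbar" using cosP[OF v0(1)] v0(2) by simp
    from blk[OF v0(1)] obtain u where u: "u \<in> U" "coset W vbar = coset (coset W2 vbar) u"
    proof
      assume "\<exists>u\<in>U. P ` coset W v0 = coset W1 u"
      then obtain u where u: "u \<in> U" "coset W vbar = coset W1 u" using ci by auto
      hence "vadd vbar u \<in> W1" using vbW by (simp add: coset_mem)
      hence "vadd u vbar \<in> U" using W1(2) by (auto simp: vadd_comm)
      thus ?thesis using vbU u(1) by blast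
    qed (use ci in auto)
    have uW2: "u \<in> W2" using vbW u(2) by (simp add: coset_mem vadd_comm[of vbar u])
    have key: "\<And>w2. w2 \<in> W2 \<Longrightarrow> vadd w2 u \<in> W"
    proof -
      fix w2 assume w2: "w2 \<in> W2"
      have "vadd (vadd w2 vbar) u \<in> coset (coset W2 vbar) u" using w2 by (simp add: coset_mem)
      hence "vadd (vadd w2 vbar) u \<in> coset W vbar" using u(2) by simp
      hence "vadd (vadd (vadd w2 vbar) u) vbar \<in> W" by (simp only: coset_mem)
      thus "vadd w2 u \<in> W" by (simp add: vadd_ac3)
    qed
    have uW: "u \<in> W" using key[OF W20] by simp
    have sub: "W2 \<subseteq> W"
    proof
      fix w2 assume "w2 \<in> W2"
      hence "vadd (vadd w2 u) u \<in> W" using Wcl[OF key uW] by simp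
      thus "w2 \<in> W" by simp
    qed
    have "card W2 = card W"
      using arg_cong[OF u(2), of card] by (simp add: coset_card)
    thus ?thesis using card_subset_eq[OF finW sub] by simp
  qed
  have lin: "linear_partition (m * b) (LApart U W1 W2 vbar)"
    unfolding linear_partition_def using W LAeq by blast
  show ?thesis using wall W1W W2W lin by simp
qed


end
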